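(* Let $G$ be a finite metacyclic group. Then $\epsilon_G(A)$ takes the same value for every minimal kernel $A$ of $G$; i.e. if $A$ is a minimal kernel of $G$ then $\epsilon_G=\epsilon_G(A)$, where $\epsilon_G$ denotes this common value.
   Context: All groups are finite. A (metacyclic) kernel of $G$ is a normal subgroup $A$ such that $A$ and $G/A$ are cyclic; a minimal kernel is a kernel of minimal order. For $A$ cyclic normal of order $m$, $T_G(A)$ is the subgroup of the unit group $\mathcal U_m$ of $\mathbb Z/m\mathbb Z$ formed by the classes $[k]_m$ such that $x\mapsto x^k$ is the restriction to $A$ of an inner automorphism of $G$. For $m\in\mathbb N$ write $m_2$ for the largest power of $2$ dividing $m$ and $m_{2'}=m/m_2$. For cyclic $T\le\mathcal U_m$ let $r$ be the greatest divisor of $m$ such that the image of $T$ in $\mathcal U_{r_{2'}}$ is trivial and its image in $\mathcal U_{r_2}$ is contained in $\{[1],[-1]\}$; then $\epsilon=-1$ if the image of $T$ in $\mathcal U_{r_2}$ is nontrivial and $\epsilon=1$ otherwise. $\epsilon_G(A)$ is this $\epsilon$ for $T=T_G(A)$. *)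

theory Defs
  imports "HOL-Algebra.Algebra" "HOL-Number_Theory.Number_Theory"
begin

definition mc_kernel :: "('a, 'b) monoid_scheme \<Rightarrow> 'a set \<Rightarrow> bool" where
  "mc_kernel G A \<longleftrightarrow> A \<lhd> G \<and> cyclic_group (G\<lparr>carrier := A\<rparr>) \<and> cyclic_group (G Mod A)"

definition metacyclic :: "('a, 'b) monoid_scheme \<Rightarrow> bool" where
  "metacyclic G \<longleftrightarrow> (\<exists>A. mc_kernel G A)"

definition minimal_kernel :: "('a, 'b) monoid_scheme \<Rightarrow> 'a set \<Rightarrow> bool" where
  "minimal_kernel G A \<longleftrightarrow> mc_kernel G A \<and> (\<forall>B. mc_kernel G B \<longrightarrow> card A \<le> card B)"

definition two_part :: "nat \<Rightarrow> nat" where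
  "two_part m = 2 ^ multiplicity (2::nat) m"

definition odd_part :: "nat \<Rightarrow> nat" where
  "odd_part m = m div two_part m"

text \<open>T_G(A) as a set of residues k in {0..<m}, coprime to m = |A|, representing the
  classes [k]_m in U_m such that x \<mapsto> x^k is the restriction to A of an inner automorphism.\<close>
definition T_G :: "('a, 'b) monoid_scheme \<Rightarrow> 'a set \<Rightarrow> nat set" where
  "T_G G A = {k. k < card A \<and> coprime k (card A) \<and>
     (\<exists>g\<in>carrier G. \<forall>a\<in>A. g \<otimes>\<^bsub>G\<^esub> a \<otimes>\<^bsub>G\<^esub> inv\<^bsub>G\<^esub> g = a [^]\<^bsub>G\<^esub> k)}"

definition eps_r :: "nat \<Rightarrow> nat set \<Rightarrow> nat" where
  "eps_r m T = Max {r. r dvd m \<and>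
      (\<forall>k\<in>T. [k = 1] (mod odd_part r)) \<and>
      (\<forall>k\<in>T. [int k = 1] (mod int (two_part r)) \<or> [int k = -1] (mod int (two_part r)))}"

definition eps_of :: "nat \<Rightarrow> nat set \<Rightarrow> int" where
  "eps_of m T = (if \<exists>k\<in>T. \<not> [k = 1] (mod two_part (eps_r m T)) then -1 else 1)"

definition eps_G :: "('a, 'b) monoid_scheme \<Rightarrow> 'a set \<Rightarrow> int" where
  "eps_G G A = eps_of (card A) (T_G G A)"

end

theory Submission imports Defs begin

lemma eps_char:
  fixes m :: nat and T :: "nat set"
  assumes m: "m > 0" and cop: "\<forall>k\<in>T. coprime k m"
  shows "eps_of m T = -1 \<longleftrightarrow> 4 dvd m \<and> (\<exists>k\<in>T. k mod 4 = 3)"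
proof -
  define S where "S = {r. r dvd m \<and>
      (\<forall>k\<in>T. [k = 1] (mod odd_part r)) \<and>
      (\<forall>k\<in>T. [int k = 1] (mod int (two_part r)) \<or> [int k = -1] (mod int (two_part r)))}"
  have fin: "finite S"
    by (rule finite_subset[of _ "{..m}"]) (auto simp: S_def dest: dvd_imp_le[OF _ m])
  have one: "1 \<in> S" by (simp add: S_def odd_part_def two_part_def)
  define rs where "rs = Max S"
  have rsS: "rs \<in> S" unfolding rs_def using fin one Max_in by blast
  have er: "eps_r m T = rs" unfolding eps_r_def rs_def S_def by simp
  define v where "v = multiplicity (2::nat) rs"
  define t where "t = two_part rs"
  have tv: "t = 2 ^ v" by (simp add: t_def v_def two_part_def)
  have rsm: "rs dvd m" using rsS S_def by simp
  have rs0: "rs > 0" using rsm m by (metis dvd_0_left_iff gr0I less_irrefl)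
  have trs: "t dvd rs" unfolding t_def two_part_def by (rule multiplicity_dvd)
  have kpm: "[int k = 1] (mod int t) \<or> [int k = -1] (mod int t)" if "k \<in> T" for k
    using rsS that unfolding S_def t_def by blast
  have eps: "eps_of m T = (if \<exists>k\<in>T. \<not> [k = 1] (mod t) then -1 else 1)"
    unfolding eps_of_def er t_def ..
  show ?thesis
  proof
    assume "eps_of m T = -1"
    then obtain k where kT: "k \<in> T" and nk: "\<not> [k = 1] (mod t)"
      unfolding eps by (auto split: if_splits)
    have nk': "\<not> [int k = 1] (mod int t)" using nk by (metis cong_int_iff of_nat_1)
    hence km: "[int k = -1] (mod int t)" using kpm[OF kT] by blast
    have "v \<ge> 2"
    proof (rule ccontr)
      assume "\<not> v \<ge> 2"
      hence "v = 0 \<or> v = 1" by auto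
      thus False
      proof
        assume "v = 0" then have "t = 1" using tv by simp
        thus False using nk by simp
      next
        assume "v = 1" then have "t = 2" using tv by simp
        thus False using nk km unfolding cong_def by presburger
      qed
    qed
    hence "4 dvd t" unfolding tv using le_imp_power_dvd[of 2 v 2] by simp
    hence "[int k = -1] (mod 4)" using km cong_dvd_modulus[of "int k" "-1" "int t" 4]
      by (metis int_dvd_int_iff of_nat_numeral)
    hence "k mod 4 = 3" unfolding cong_def by presburger
    moreover have "4 dvd m" using \<open>4 dvd t\<close> trs rsm by (meson dvd_trans)
    ultimately show "4 dvd m \<and> (\<exists>k\<in>T. k mod 4 = 3)" using kT by blast
  next
    assume H: "4 dvd m \<and> (\<exists>k\<in>T. k mod 4 = 3)"
    then obtain k0 where k0T: "k0 \<in> T" and k03: "k0 mod 4 = 3" by blast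
    have m4: "4 dvd m" using H by blast
    define ob where "ob = odd_part rs"
    have rto: "rs = t * ob" unfolding ob_def odd_part_def t_def
      by (simp add: multiplicity_dvd two_part_def)
    have oodd: "\<not> 2 dvd ob" unfolding ob_def odd_part_def two_part_def
      using multiplicity_decompose[of rs "2::nat"] rs0 by simp
    have "4 dvd t"
    proof (rule ccontr)
      assume n4: "\<not> 4 dvd t"
      have "v \<le> 1"
      proof (rule ccontr)
        assume "\<not> v \<le> 1"
        hence "v \<ge> 2" by simp
        thus False using n4 unfolding tv using le_imp_power_dvd[of 2 v "2::nat"] by simp
      qed
      hence t2: "t \<le> 2" unfolding tv using power_increasing[of v 1 "2::nat"] by simp
      have ob0: "ob > 0" using rto rs0 by (metis gr0I mult_0_right less_irrefl)
      have m2: "multiplicity (2::nat) (4 * ob) = 2"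
      proof (rule multiplicity_eqI)
        show "2 ^ 2 dvd 4 * ob" by simp
        show "\<not> 2 ^ Suc 2 dvd 4 * ob" using oodd by auto
      qed
      have tp: "two_part (4 * ob) = 4" by (simp add: two_part_def m2)
      have op: "odd_part (4 * ob) = ob" by (simp add: odd_part_def tp)
      have "ob dvd m" using rto rsm by (metis dvd_mult_right dvd_trans)
      moreover have "coprime 4 ob"
      proof -
        have "coprime (2::nat) ob" using oodd by simp
        then have "coprime ((2::nat)^2) ob" by (simp only: coprime_power_left_iff) simp
        moreover have "(4::nat) = 2^2" by simp
        ultimately show ?thesis by metis
      qed
      ultimately have "4 * ob dvd m" using m4 by (simp add: divides_mult)
      moreover have "\<forall>k\<in>T. [k = 1] (mod odd_part (4 * ob))"
        using rsS unfolding S_def op by (simp add: ob_def)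
      moreover have "\<forall>k\<in>T. [int k = 1] (mod int (two_part (4*ob))) \<or> [int k = -1] (mod int (two_part (4*ob)))"
      proof
        fix k assume kT: "k \<in> T"
        have "coprime k m" using cop kT by blast
        hence "odd k" using m4 by (metis coprime_common_divisor dvd_trans even_numeral not_coprimeI odd_one dvd_refl)
        hence "k mod 4 = 1 \<or> k mod 4 = 3" by presburger
        thus "[int k = 1] (mod int (two_part (4*ob))) \<or> [int k = -1] (mod int (two_part (4*ob)))"
          unfolding tp cong_def by auto presburger+
      qed
      ultimately have "4 * ob \<in> S" unfolding S_def by blast
      hence "4 * ob \<le> rs" unfolding rs_def using fin Max_ge by blast
      moreover have "rs \<le> 2 * ob" using rto t2 by simp
      ultimately show False using ob0 by simp
    qed
    have "\<not> [k0 = 1] (mod t)"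
    proof
      assume "[k0 = 1] (mod t)"
      hence "[k0 = 1] (mod 4)" using \<open>4 dvd t\<close> cong_dvd_modulus_nat by blast
      thus False using k03 unfolding cong_def by simp
    qed
    thus "eps_of m T = -1" unfolding eps using k0T by auto
  qed
qed


context group
begin

lemma int_to_nat_pow:
  assumes fin: "finite (carrier G)" and x: "x \<in> carrier G"
  shows "\<exists>k::nat. x [^] (n::int) = x [^] k"
proof -
  have o: "ord x \<ge> 1" using ord_ge_1 fin x by blast
  define k where "k = nat (n mod int (ord x))"
  have ik: "int k = n mod int (ord x)" using o by (simp add: k_def)
  have "int (ord x) dvd (int k - n)" unfolding ik by (metis mod_mod_trivial mod_eq_dvd_iff)
  hence "x [^] n = x [^] (int k)" using int_pow_eq[OF x, of n "int k"] by simp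
  thus ?thesis by (metis int_pow_int)
qed

lemma sub_pow_closed:
  assumes "subgroup A G" "a \<in> A"
  shows "a [^] (n::nat) \<in> A"
  using assms by (induction n) (auto simp: subgroup.one_closed subgroup.m_closed)

lemma cyc_gen:
  assumes fin: "finite (carrier G)" and sub: "subgroup A G"
    and cyc: "cyclic_group (G\<lparr>carrier := A\<rparr>)"
  shows "\<exists>a\<in>A. \<forall>x\<in>A. \<exists>k::nat. x = a [^] k"
proof -
  interpret H: group "G\<lparr>carrier := A\<rparr>" using subgroup.subgroup_is_group[OF sub] is_group by blast
  obtain a where a: "a \<in> A" and eq: "A = range (\<lambda>n::int. a [^]\<^bsub>G\<lparr>carrier := A\<rparr>\<^esub> n)"
    using H.cyclic_group cyc by auto
  have aG: "a \<in> carrier G" using subgroup.mem_carrier[OF sub a] .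
  show ?thesis
  proof (intro bexI[OF _ a] ballI)
    fix x assume "x \<in> A"
    then obtain n :: int where "x = a [^]\<^bsub>G\<lparr>carrier := A\<rparr>\<^esub> n" using eq by auto
    hence "x = a [^] n" using int_pow_consistent[OF sub a] by simp
    then show "\<exists>k::nat. x = a [^] k" using int_to_nat_pow[OF fin aG] by metis
  qed
qed

lemma ord_gen:
  assumes fin: "finite (carrier G)" and sub: "subgroup A G" and a: "a \<in> A"
    and gen: "\<forall>x\<in>A. \<exists>k::nat. x = a [^] k"
  shows "ord a = card A"
proof -
  have aG: "a \<in> carrier G" using subgroup.mem_carrier[OF sub a] .
  have "generate G {a} = A"
    unfolding generate_pow_on_finite_carrier[OF fin aG]
    using gen sub_pow_closed[OF sub a] by auto
  thus ?thesis using generate_pow_card[OF aG] by simp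
qed

lemma pow_eq_cong:
  assumes x: "x \<in> carrier G" and e: "x [^] (i::nat) = x [^] (j::nat)"
  shows "[i = j] (mod ord x)"
proof -
  have "x [^] (int i) = x [^] (int j)" using e by (simp add: int_pow_int)
  hence "int (ord x) dvd (int j - int i)" using int_pow_eq[OF x] by blast
  hence "[int i = int j] (mod int (ord x))"
    by (metis cong_iff_dvd_diff cong_sym)
  thus ?thesis using cong_int_iff by blast
qed

lemma conj_pow:
  assumes h: "h \<in> carrier G" and x: "x \<in> carrier G"
  shows "h \<otimes> x [^] (s::nat) \<otimes> inv h = (h \<otimes> x \<otimes> inv h) [^] s"
proof (induction s)
  case 0
  then show ?case using h by simp
next
  case (Suc s)
  have "h \<otimes> x [^] Suc s \<otimes> inv h = (h \<otimes> x [^] s \<otimes> inv h) \<otimes> (h \<otimes> x \<otimes> inv h)"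
  proof -
    have c: "inv h \<otimes> (h \<otimes> y) = y" if "y \<in> carrier G" for y
      using h that by (simp add: m_assoc[symmetric])
    show ?thesis using h x by (simp add: m_assoc c)
  qed
  also have "\<dots> = (h \<otimes> x \<otimes> inv h) [^] Suc s" using Suc by simp
  finally show ?case .
qed

end


context group
begin

lemma conj_action:
  assumes fin: "finite (carrier G)" and nB: "B \<lhd> G" and b0: "b0 \<in> B"
    and gen: "\<forall>x\<in>B. \<exists>k::nat. x = b0 [^] k" and h: "h \<in> carrier G"
  shows "\<exists>K\<in>T_G G B. \<forall>x\<in>B. h \<otimes> x \<otimes> inv h = x [^] K"
proof -
  have sub: "subgroup B G" using nB normal_imp_subgroup by blast
  interpret N: normal B G using nB .
  have b0G: "b0 \<in> carrier G" using subgroup.mem_carrier[OF sub b0] .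
  define m where "m = card B"
  have om: "ord b0 = m" using ord_gen[OF fin sub b0 gen] m_def by simp
  have m0: "m > 0" using om ord_ge_1[OF fin b0G] by simp
  have b0m: "b0 [^] m = \<one>" using om pow_ord_eq_1[OF b0G] by simp
  have red: "b0 [^] (n::nat) = b0 [^] (n mod m)" for n
  proof -
    have "b0 [^] n = b0 [^] (m * (n div m) + n mod m)" by simp
    also have "\<dots> = (b0 [^] m) [^] (n div m) \<otimes> b0 [^] (n mod m)"
      using b0G by (simp add: nat_pow_mult nat_pow_pow)
    also have "\<dots> = b0 [^] (n mod m)" using b0m b0G by simp
    finally show ?thesis .
  qed
  obtain K0 :: nat where K0: "h \<otimes> b0 \<otimes> inv h = b0 [^] K0"
    using bspec[OF gen N.inv_op_closed2[OF h b0]] by blast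
  define K where "K = K0 mod m"
  have K: "h \<otimes> b0 \<otimes> inv h = b0 [^] K" using K0 red K_def by simp
  have Km: "K < m" using K_def m0 by simp
  obtain L :: nat where L: "inv h \<otimes> b0 \<otimes> h = b0 [^] L"
    using bspec[OF gen N.inv_op_closed1[OF h b0]] by blast
  have c2: "h \<otimes> (inv h \<otimes> y) = y" if "y \<in> carrier G" for y
    using h that by (simp add: m_assoc[symmetric])
  have "b0 = h \<otimes> (inv h \<otimes> b0 \<otimes> h) \<otimes> inv h" using h b0G by (simp add: m_assoc c2)
  also have "\<dots> = h \<otimes> b0 [^] L \<otimes> inv h" using L by simp
  also have "\<dots> = (b0 [^] K) [^] L" using conj_pow[OF h b0G] K by simp
  also have "\<dots> = b0 [^] (K * L)" using b0G nat_pow_pow by simp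
  finally have "b0 [^] (K*L) = b0 [^] (1::nat)" using b0G by simp
  hence "[K*L = 1] (mod m)" using pow_eq_cong[OF b0G] om by simp
  hence cop: "coprime K m" using coprime_iff_invertible_nat by auto
  have act: "\<forall>x\<in>B. h \<otimes> x \<otimes> inv h = x [^] K"
  proof
    fix x assume "x \<in> B"
    then obtain s :: nat where s: "x = b0 [^] s" using gen by blast
    have "h \<otimes> x \<otimes> inv h = (b0 [^] K) [^] s" using conj_pow[OF h b0G] K s by simp
    also have "\<dots> = b0 [^] (K*s)" by (simp add: nat_pow_pow b0G)
    also have "\<dots> = (b0 [^] s) [^] K" by (simp add: nat_pow_pow b0G mult.commute)
    finally show "h \<otimes> x \<otimes> inv h = x [^] K" using s by simp
  qed
  have "K \<in> T_G G B" unfolding T_G_def using Km cop act h m_def by auto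
  thus ?thesis using act by blast
qed

lemma quot_decomp:
  assumes nB: "B \<lhd> G" and fin: "finite (carrier G)" and cyc: "cyclic_group (G Mod B)"
  shows "\<exists>b\<in>carrier G. \<forall>x\<in>carrier G. \<exists>\<beta>\<in>B. \<exists>i::nat. x = \<beta> \<otimes> b [^] i"
proof -
  interpret N: normal B G using nB .
  interpret Q: group "G Mod B" using N.factorgroup_is_group .
  obtain C where C: "C \<in> carrier (G Mod B)"
    and eq: "carrier (G Mod B) = range (\<lambda>n::int. C [^]\<^bsub>G Mod B\<^esub> n)"
    using Q.cyclic_group cyc by auto
  obtain b where b: "b \<in> carrier G" and Cb: "C = B #> b" using C by (auto simp add: carrier_FactGroup)
  show ?thesis
  proof (intro bexI[OF _ b] ballI)
    fix x assume x: "x \<in> carrier G"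
    have "B #> x \<in> carrier (G Mod B)" using x by (auto simp add: carrier_FactGroup)
    then obtain n :: int where "B #> x = C [^]\<^bsub>G Mod B\<^esub> n" using eq by auto
    also have "\<dots> = B #> (b [^] n)" using Cb N.FactGroup_int_pow[OF b] by simp
    finally have e1: "B #> x = B #> (b [^] n)" .
    obtain i :: nat where i: "b [^] n = b [^] i" using int_to_nat_pow[OF fin b] by blast
    have "x \<in> B #> (b [^] i)" using rcos_self[OF x normal_imp_subgroup[OF nB]] e1 i by simp
    then show "\<exists>\<beta>\<in>B. \<exists>i::nat. x = \<beta> \<otimes> b [^] i" unfolding r_coset_def by auto
  qed
qed

lemma comm_calc:
  assumes b1: "\<beta>1 \<in> carrier G" and b2: "\<beta>2 \<in> carrier G" and c: "c \<in> carrier G"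
    and d: "d \<in> carrier G" and cd: "c \<otimes> d = d \<otimes> c"
    and e2: "c \<otimes> \<beta>2 \<otimes> inv c = y2" and e1: "d \<otimes> inv \<beta>1 \<otimes> inv d = y1"
  shows "(\<beta>1 \<otimes> c) \<otimes> (\<beta>2 \<otimes> d) \<otimes> inv (\<beta>1 \<otimes> c) \<otimes> inv (\<beta>2 \<otimes> d) = \<beta>1 \<otimes> y2 \<otimes> y1 \<otimes> inv \<beta>2"
proof -
  have y2: "y2 \<in> carrier G" using e2 b2 c by auto
  have y1: "y1 \<in> carrier G" using e1 b1 d by auto
  have f2: "c \<otimes> (\<beta>2 \<otimes> z) = y2 \<otimes> (c \<otimes> z)" if "z \<in> carrier G" for z
  proof -
    have "y2 \<otimes> (c \<otimes> z) = (c \<otimes> \<beta>2 \<otimes> inv c) \<otimes> (c \<otimes> z)" using e2 by simp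
    also have "\<dots> = c \<otimes> (\<beta>2 \<otimes> (inv c \<otimes> (c \<otimes> z)))" using b2 c that by (simp add: m_assoc)
    also have "inv c \<otimes> (c \<otimes> z) = z" using c that by (simp add: m_assoc[symmetric])
    finally show ?thesis by simp
  qed
  have f1: "d \<otimes> (inv \<beta>1 \<otimes> z) = y1 \<otimes> (d \<otimes> z)" if "z \<in> carrier G" for z
  proof -
    have "y1 \<otimes> (d \<otimes> z) = (d \<otimes> inv \<beta>1 \<otimes> inv d) \<otimes> (d \<otimes> z)" using e1 by simp
    also have "\<dots> = d \<otimes> (inv \<beta>1 \<otimes> (inv d \<otimes> (d \<otimes> z)))" using b1 d that by (simp add: m_assoc)
    also have "inv d \<otimes> (d \<otimes> z) = z" using d that by (simp add: m_assoc[symmetric])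
    finally show ?thesis by simp
  qed
  have fcd: "c \<otimes> (d \<otimes> z) = d \<otimes> (c \<otimes> z)" if "z \<in> carrier G" for z
    using cd c d that by (metis m_assoc)
  have can1: "c \<otimes> (inv c \<otimes> z) = z" if "z \<in> carrier G" for z
    using c that by (simp add: m_assoc[symmetric])
  have can2: "d \<otimes> (inv d \<otimes> z) = z" if "z \<in> carrier G" for z
    using d that by (simp add: m_assoc[symmetric])
  have "(\<beta>1 \<otimes> c) \<otimes> (\<beta>2 \<otimes> d) \<otimes> inv (\<beta>1 \<otimes> c) \<otimes> inv (\<beta>2 \<otimes> d)
      = \<beta>1 \<otimes> (c \<otimes> (\<beta>2 \<otimes> (d \<otimes> (inv c \<otimes> (inv \<beta>1 \<otimes> (inv d \<otimes> inv \<beta>2))))))"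
    using b1 b2 c d by (simp add: m_assoc inv_mult_group)
  also have "\<dots> = \<beta>1 \<otimes> (y2 \<otimes> (c \<otimes> (d \<otimes> (inv c \<otimes> (inv \<beta>1 \<otimes> (inv d \<otimes> inv \<beta>2))))))"
    using b1 b2 c d by (simp add: f2)
  also have "\<dots> = \<beta>1 \<otimes> (y2 \<otimes> (d \<otimes> (c \<otimes> (inv c \<otimes> (inv \<beta>1 \<otimes> (inv d \<otimes> inv \<beta>2))))))"
    using b1 b2 c d by (simp add: fcd)
  also have "\<dots> = \<beta>1 \<otimes> (y2 \<otimes> (d \<otimes> (inv \<beta>1 \<otimes> (inv d \<otimes> inv \<beta>2))))"
    using b1 b2 c d by (simp add: can1)
  also have "\<dots> = \<beta>1 \<otimes> (y2 \<otimes> (y1 \<otimes> (d \<otimes> (inv d \<otimes> inv \<beta>2))))"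
    using b1 b2 c d by (simp add: f1)
  also have "\<dots> = \<beta>1 \<otimes> y2 \<otimes> y1 \<otimes> inv \<beta>2"
    using b1 b2 c d y1 y2 by (simp add: can2 m_assoc)
  finally show ?thesis .
qed

end


context group
begin

lemma key:
  assumes fin: "finite (carrier G)" and kA: "mc_kernel G A" and kB: "mc_kernel G B"
    and card: "card A = card B" and m4: "4 dvd card B"
    and kT: "k \<in> T_G G A" and k3: "k mod 4 = 3"
  shows "\<exists>K\<in>T_G G B. K mod 4 = 3"
proof (rule ccontr)
  assume H: "\<not> (\<exists>K\<in>T_G G B. K mod 4 = 3)"
  define m where "m = card B"
  have nA: "A \<lhd> G" and cA: "cyclic_group (G\<lparr>carrier := A\<rparr>)" using kA mc_kernel_def by auto
  have nB: "B \<lhd> G" and cB: "cyclic_group (G\<lparr>carrier := B\<rparr>)" and cQ: "cyclic_group (G Mod B)"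
    using kB mc_kernel_def by auto
  have subA: "subgroup A G" using nA normal_imp_subgroup by blast
  have subB: "subgroup B G" using nB normal_imp_subgroup by blast
  obtain a where a: "a \<in> A" and agen: "\<forall>x\<in>A. \<exists>k::nat. x = a [^] k" using cyc_gen[OF fin subA cA] by blast
  obtain b0 where b0: "b0 \<in> B" and bgen: "\<forall>x\<in>B. \<exists>k::nat. x = b0 [^] k" using cyc_gen[OF fin subB cB] by blast
  have aG: "a \<in> carrier G" using subgroup.mem_carrier[OF subA a] .
  have b0G: "b0 \<in> carrier G" using subgroup.mem_carrier[OF subB b0] .
  have oa: "ord a = m" using ord_gen[OF fin subA a agen] card m_def by simp
  have ob: "ord b0 = m" using ord_gen[OF fin subB b0 bgen] m_def by simp
  have m0: "m > 0" using ob ord_ge_1[OF fin b0G] by simp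
  have Kmod: "\<exists>u. K = 4 * u + 1" if KT: "K \<in> T_G G B" for K
  proof -
    have cop: "coprime K m" using KT unfolding T_G_def m_def by blast
    have n3: "K mod 4 \<noteq> 3" using H KT by blast
    have "odd K"
    proof
      assume "even K"
      moreover have "2 dvd m" using m4 m_def by (metis dvd_trans dvd_triv_left numeral_Bit0_eq_double mult_2)
      ultimately show False using cop by (metis coprime_common_divisor odd_one)
    qed
    hence "K mod 4 = 1" using n3 by presburger
    thus ?thesis by presburger
  qed
  obtain g where g: "g \<in> carrier G" and gact: "\<forall>x\<in>A. g \<otimes> x \<otimes> inv g = x [^] k"
    using kT unfolding T_G_def by blast
  have k1: "k = Suc (k - 1)" using k3 by presburger
  have z1: "g \<otimes> a \<otimes> inv g \<otimes> inv a = a [^] (k - 1)"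
  proof -
    have "g \<otimes> a \<otimes> inv g = a [^] (k - 1) \<otimes> a" using gact a k1 by (metis nat_pow_Suc)
    thus ?thesis using aG by (simp add: m_assoc)
  qed
  obtain b where b: "b \<in> carrier G" and dec: "\<forall>x\<in>carrier G. \<exists>\<beta>\<in>B. \<exists>i::nat. x = \<beta> \<otimes> b [^] i"
    using quot_decomp[OF nB fin cQ] by blast
  obtain \<beta>1 and i :: nat where be1: "\<beta>1 \<in> B" and gdec: "g = \<beta>1 \<otimes> b [^] i" using dec g by blast
  obtain \<beta>2 and j :: nat where be2: "\<beta>2 \<in> B" and adec: "a = \<beta>2 \<otimes> b [^] j" using dec aG by blast
  have be1G: "\<beta>1 \<in> carrier G" using subgroup.mem_carrier[OF subB be1] .
  have be2G: "\<beta>2 \<in> carrier G" using subgroup.mem_carrier[OF subB be2] .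
  have cd: "b [^] i \<otimes> b [^] j = b [^] j \<otimes> b [^] i" using b by (simp add: nat_pow_mult add.commute)
  obtain Kc where KcT: "Kc \<in> T_G G B" and Kc: "\<forall>x\<in>B. b [^] i \<otimes> x \<otimes> inv (b [^] i) = x [^] Kc"
    using conj_action[OF fin nB b0 bgen] b by blast
  obtain Kd where KdT: "Kd \<in> T_G G B" and Kd: "\<forall>x\<in>B. b [^] j \<otimes> x \<otimes> inv (b [^] j) = x [^] Kd"
    using conj_action[OF fin nB b0 bgen] b by blast
  have ib1: "inv \<beta>1 \<in> B" using subgroup.m_inv_closed[OF subB be1] .
  have ib2: "inv \<beta>2 \<in> B" using subgroup.m_inv_closed[OF subB be2] .
  have z2: "g \<otimes> a \<otimes> inv g \<otimes> inv a = \<beta>1 \<otimes> \<beta>2 [^] Kc \<otimes> (inv \<beta>1) [^] Kd \<otimes> inv \<beta>2"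
    unfolding gdec adec
    by (rule comm_calc[OF be1G be2G _ _ cd]) (use b Kc Kd be2 ib1 in auto)
  obtain s1 :: nat where s1: "\<beta>1 = b0 [^] s1" using bgen be1 by blast
  obtain s2 :: nat where s2: "\<beta>2 = b0 [^] s2" using bgen be2 by blast
  obtain t1 :: nat where t1: "inv \<beta>1 = b0 [^] t1" using bgen ib1 by blast
  obtain t2 :: nat where t2: "inv \<beta>2 = b0 [^] t2" using bgen ib2 by blast
  have d1: "m dvd s1 + t1"
  proof -
    have "b0 [^] (s1 + t1) = b0 [^] (0::nat)" using s1 t1 be1G b0G
      by (metis nat_pow_mult r_inv nat_pow_0)
    hence "[s1 + t1 = 0] (mod m)" using pow_eq_cong[OF b0G] ob by simp
    thus ?thesis by (simp add: cong_0_iff)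
  qed
  have d2: "m dvd s2 + t2"
  proof -
    have "b0 [^] (s2 + t2) = b0 [^] (0::nat)" using s2 t2 be2G b0G
      by (metis nat_pow_mult r_inv nat_pow_0)
    hence "[s2 + t2 = 0] (mod m)" using pow_eq_cong[OF b0G] ob by simp
    thus ?thesis by (simp add: cong_0_iff)
  qed
  define E where "E = s1 + s2 * Kc + t1 * Kd + t2"
  have zE: "\<beta>1 \<otimes> \<beta>2 [^] Kc \<otimes> (inv \<beta>1) [^] Kd \<otimes> inv \<beta>2 = b0 [^] E"
    unfolding t1 t2 unfolding s1 s2 E_def using b0G by (simp add: nat_pow_pow nat_pow_mult)
  obtain u where u: "Kc = 4 * u + 1" using Kmod[OF KcT] by blast
  obtain v where v: "Kd = 4 * v + 1" using Kmod[OF KdT] by blast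
  obtain q where q: "m = 4 * q" using m4 m_def by blast
  have q0: "q > 0" using q m0 by simp
  have Eq: "E * q = (s1 + t1) * q + (s2 + t2) * q + m * (s2 * u + t1 * v)"
    unfolding E_def u v q by (simp add: algebra_simps)
  have "m dvd E * q" unfolding Eq using d1 d2 by simp
  hence "b0 [^] (E * q) = \<one>" using pow_eq_id[OF b0G] ob by simp
  hence "a [^] ((k - 1) * q) = \<one>" using z1 z2 zE aG b0G by (metis nat_pow_pow)
  hence "m dvd (k - 1) * q" using pow_eq_id[OF aG] oa by simp
  hence "4 * q dvd (k - 1) * q" using q by simp
  hence "4 dvd k - 1" using q0 by simp
  thus False using k3 k1 by presburger
qed

lemma transfer:
  assumes fin: "finite (carrier G)" and kA: "mc_kernel G A" and kB: "mc_kernel G B"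
    and card: "card A = card B" and e: "eps_G G A = -1"
  shows "eps_G G B = -1"
proof -
  have pos: "card KK > 0" if "mc_kernel G KK" for KK
  proof -
    have sub: "subgroup KK G" using that mc_kernel_def normal_imp_subgroup by blast
    have "finite KK" using subgroup.subset[OF sub] fin finite_subset by blast
    moreover have "\<one> \<in> KK" using subgroup.one_closed[OF sub] .
    ultimately show ?thesis by (simp add: card_gt_0_iff) blast
  qed
  have cop: "\<forall>k\<in>T_G G KK. coprime k (card KK)" for KK unfolding T_G_def by blast
  have "4 dvd card A \<and> (\<exists>k\<in>T_G G A. k mod 4 = 3)"
    using e eps_char[OF pos[OF kA] cop] unfolding eps_G_def by blast
  then obtain k where "4 dvd card B" "k \<in> T_G G A" "k mod 4 = 3" using card by auto
  then obtain K where "K \<in> T_G G B" "K mod 4 = 3" using key[OF fin kA kB card] by blast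
  thus ?thesis using eps_char[OF pos[OF kB] cop] \<open>4 dvd card B\<close> unfolding eps_G_def by blast
qed

end

theorem lemma3p2:
  fixes G :: "('a, 'b) monoid_scheme"
  assumes "group G" and "finite (carrier G)" and "metacyclic G"
  shows "\<exists>e. \<forall>A. minimal_kernel G A \<longrightarrow> eps_G G A = e"
proof (cases "\<exists>A0. minimal_kernel G A0")
  case False
  then show ?thesis by auto
next
  case True
  then obtain A0 where A0: "minimal_kernel G A0" by blast
  interpret group G using assms(1) .
  show ?thesis
  proof (intro exI allI impI)
    fix A assume A: "minimal_kernel G A"
    have kA: "mc_kernel G A" and kA0: "mc_kernel G A0" using A A0 minimal_kernel_def by auto
    have c: "card A = card A0" using A A0 unfolding minimal_kernel_def by (meson le_antisym)
    have vals: "eps_G G KK = 1 \<or> eps_G G KK = -1" for KK unfolding eps_G_def eps_of_def by auto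
    show "eps_G G A = eps_G G A0"
      using transfer[OF assms(2) kA kA0 c] transfer[OF assms(2) kA0 kA c[symmetric]] vals[of A] vals[of A0]
      by auto
  qed
qed

end
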